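(* Let $A$ be a skew brace and endow $\mathrm{Spec}\,A$ with the spectral topology. Then the irreducible closed subsets of $\mathrm{Spec}\,A$ are precisely the sets $H(P)=\{Q\in\mathrm{Spec}\,A\mid P\subseteq Q\}$ with $P\in\mathrm{Spec}\,A$.
   Context: A (left) skew brace is a triple $(A,+,\circ)$ where $(A,+)$ and $(A,\circ)$ are groups such that $a\circ(b+c)=a\circ b-a+a\circ c$ for all $a,b,c\in A$; the common identity is $e$. Put $\lambda_a(b)=-a+a\circ b$ and $a*b=-a+a\circ b-b$. An ideal of $A$ is a normal subgroup $I$ of both $(A,+)$ and $(A,\circ)$ with $\lambda_a(I)\subseteq I$ for all $a\in A$. For subsets $I,J\subseteq A$, $I*J=\{i*j\mid i\in I,j\in J\}$. A prime ideal is a proper ideal $P$ such that for any subsets $I,J$ of $A$, $I*J\subseteq P$ implies $I\subseteq P$ or $J\subseteq P$; $\mathrm{Spec}\,A$ is the set of prime ideals. For an ideal $I$, $H(I)=\{P\in\mathrm{Spec}\,A\mid I\subseteq P\}$; the spectral topology on $\mathrm{Spec}\,A$ has as closed sets exactly the sets $H(I)$, $I$ an ideal. A closed subset $S$ is irreducible if it is not the union of two closed subsets $S_1,S_2\subsetneq S$. *)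

theory Defs
  imports "HOL-Algebra.Algebra"
begin

text \<open>A (left) skew brace on a common carrier: S is the additive group (A,+),
  M the multiplicative group (A,\<circ>).\<close>

definition skew_brace :: "'a monoid \<Rightarrow> 'a monoid \<Rightarrow> bool" where
  "skew_brace S M \<longleftrightarrow> group S \<and> group M \<and> carrier S = carrier M \<and>
     (\<forall>a\<in>carrier S. \<forall>b\<in>carrier S. \<forall>c\<in>carrier S.
        a \<otimes>\<^bsub>M\<^esub> (b \<otimes>\<^bsub>S\<^esub> c)
          = (a \<otimes>\<^bsub>M\<^esub> b) \<otimes>\<^bsub>S\<^esub> inv\<^bsub>S\<^esub> a \<otimes>\<^bsub>S\<^esub> (a \<otimes>\<^bsub>M\<^esub> c))"

definition brace_lambda :: "'a monoid \<Rightarrow> 'a monoid \<Rightarrow> 'a \<Rightarrow> 'a \<Rightarrow> 'a" where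
  "brace_lambda S M a b = inv\<^bsub>S\<^esub> a \<otimes>\<^bsub>S\<^esub> (a \<otimes>\<^bsub>M\<^esub> b)"

definition brace_star :: "'a monoid \<Rightarrow> 'a monoid \<Rightarrow> 'a \<Rightarrow> 'a \<Rightarrow> 'a" where
  "brace_star S M a b = inv\<^bsub>S\<^esub> a \<otimes>\<^bsub>S\<^esub> (a \<otimes>\<^bsub>M\<^esub> b) \<otimes>\<^bsub>S\<^esub> inv\<^bsub>S\<^esub> b"

definition brace_ideal :: "'a monoid \<Rightarrow> 'a monoid \<Rightarrow> 'a set \<Rightarrow> bool" where
  "brace_ideal S M I \<longleftrightarrow> normal I S \<and> normal I M \<and>
     (\<forall>a\<in>carrier S. \<forall>i\<in>I. brace_lambda S M a i \<in> I)"

definition set_star :: "'a monoid \<Rightarrow> 'a monoid \<Rightarrow> 'a set \<Rightarrow> 'a set \<Rightarrow> 'a set" where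
  "set_star S M I J = {brace_star S M i j | i j. i \<in> I \<and> j \<in> J}"

definition prime_ideal :: "'a monoid \<Rightarrow> 'a monoid \<Rightarrow> 'a set \<Rightarrow> bool" where
  "prime_ideal S M P \<longleftrightarrow> brace_ideal S M P \<and> P \<noteq> carrier S \<and>
     (\<forall>I J. I \<subseteq> carrier S \<longrightarrow> J \<subseteq> carrier S \<longrightarrow>
        set_star S M I J \<subseteq> P \<longrightarrow> I \<subseteq> P \<or> J \<subseteq> P)"

definition Spec :: "'a monoid \<Rightarrow> 'a monoid \<Rightarrow> 'a set set" where
  "Spec S M = {P. prime_ideal S M P}"

definition HH :: "'a monoid \<Rightarrow> 'a monoid \<Rightarrow> 'a set \<Rightarrow> 'a set set" where
  "HH S M I = {P \<in> Spec S M. I \<subseteq> P}"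

definition spec_closed :: "'a monoid \<Rightarrow> 'a monoid \<Rightarrow> 'a set set \<Rightarrow> bool" where
  "spec_closed S M Xs \<longleftrightarrow> (\<exists>K. brace_ideal S M K \<and> Xs = HH S M K)"

text \<open>Irreducible closed set (standard convention: nonempty).\<close>
definition spec_irreducible :: "'a monoid \<Rightarrow> 'a monoid \<Rightarrow> 'a set set \<Rightarrow> bool" where
  "spec_irreducible S M F \<longleftrightarrow> spec_closed S M F \<and> F \<noteq> {} \<and>
     \<not> (\<exists>F1 F2. spec_closed S M F1 \<and> spec_closed S M F2 \<and> F1 \<subset> F \<and> F2 \<subset> F \<and> F = F1 \<union> F2)"

end

theory Submission
  imports Defs
begin

lemma normal_Inter:
  assumes "group G" "A \<noteq> {}" "\<And>H. H \<in> A \<Longrightarrow> H \<lhd> G"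
  shows "\<Inter>A \<lhd> G"
proof -
  interpret group G by fact
  have "subgroup (\<Inter>A) G"
    by (rule subgroups_Inter) (use assms normal_imp_subgroup in auto)
  moreover have "\<forall>x \<in> carrier G. \<forall>h \<in> \<Inter>A. x \<otimes>\<^bsub>G\<^esub> h \<otimes>\<^bsub>G\<^esub> (inv\<^bsub>G\<^esub> x) \<in> \<Inter>A"
    using assms(3) normal_inv_iff by blast
  ultimately show ?thesis using normal_inv_iff by blast
qed

lemma ideal_Inter:
  assumes sb: "skew_brace S M" and ne: "A \<noteq> {}" and id: "\<And>I. I \<in> A \<Longrightarrow> brace_ideal S M I"
  shows "brace_ideal S M (\<Inter>A)"
proof -
  have gS: "group S" and gM: "group M" using sb unfolding skew_brace_def by auto
  show ?thesis unfolding brace_ideal_def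
  proof (intro conjI)
    show "\<Inter>A \<lhd> S" by (rule normal_Inter[OF gS ne]) (use id brace_ideal_def in blast)
    show "\<Inter>A \<lhd> M" by (rule normal_Inter[OF gM ne]) (use id brace_ideal_def in blast)
    show "\<forall>a\<in>carrier S. \<forall>i\<in>\<Inter>A. brace_lambda S M a i \<in> \<Inter>A"
      using id unfolding brace_ideal_def by blast
  qed
qed

lemma spec_sub: "P \<in> Spec S M \<Longrightarrow> brace_ideal S M P"
  unfolding Spec_def prime_ideal_def by auto

theorem lemma4p10:
  fixes S M :: "'a monoid"
  assumes "skew_brace S M"
  shows "spec_irreducible S M F \<longleftrightarrow> (\<exists>P\<in>Spec S M. F = HH S M P)"
proof
  assume "\<exists>P\<in>Spec S M. F = HH S M P"
  then obtain P where P: "P \<in> Spec S M" "F = HH S M P" by blast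
  have PF: "P \<in> F" using P unfolding HH_def by auto
  show "spec_irreducible S M F" unfolding spec_irreducible_def
  proof (intro conjI notI)
    show "spec_closed S M F" unfolding spec_closed_def using P spec_sub by blast
    show "F = {} \<Longrightarrow> False" using PF by auto
    assume "\<exists>F1 F2. spec_closed S M F1 \<and> spec_closed S M F2 \<and> F1 \<subset> F \<and> F2 \<subset> F \<and> F = F1 \<union> F2"
    then obtain F1 F2 where F: "spec_closed S M F1" "spec_closed S M F2" "F1 \<subset> F" "F2 \<subset> F" "F = F1 \<union> F2"
      by blast
    have key: "G = F" if h: "spec_closed S M G" "G \<subseteq> F" "P \<in> G" for G
    proof -
      obtain K where K: "G = HH S M K" using h(1) unfolding spec_closed_def by blast
      have "K \<subseteq> P" using h(3) K unfolding HH_def by auto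
      hence "F \<subseteq> G" using P(2) K unfolding HH_def by auto
      thus ?thesis using h(2) by auto
    qed
    show False using F PF key by blast
  qed
next
  assume irr: "spec_irreducible S M F"
  then obtain K where K: "brace_ideal S M K" "F = HH S M K" and Fne: "F \<noteq> {}"
    unfolding spec_irreducible_def spec_closed_def by blast
  have noSplit: "\<not> (spec_closed S M F1 \<and> spec_closed S M F2 \<and> F1 \<subset> F \<and> F2 \<subset> F \<and> F = F1 \<union> F2)" for F1 F2
    using irr unfolding spec_irreducible_def by blast
  define P where "P = \<Inter>F"
  have FS: "F \<subseteq> Spec S M" using K unfolding HH_def by auto
  have KP: "K \<subseteq> P" using K unfolding P_def HH_def by auto
  have Pid: "brace_ideal S M P" unfolding P_def
    by (rule ideal_Inter[OF assms Fne]) (use FS spec_sub in blast)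
  have closedsub: "spec_closed S M {Q\<in>F. Y \<subseteq> Q}" if ne: "{Q\<in>F. Y \<subseteq> Q} \<noteq> {}" for Y
  proof -
    let ?G = "{Q\<in>F. Y \<subseteq> Q}"
    have "brace_ideal S M (\<Inter>?G)"
      by (rule ideal_Inter[OF assms ne]) (use FS spec_sub in blast)
    moreover have "?G = HH S M (\<Inter>?G)"
    proof
      show "?G \<subseteq> HH S M (\<Inter>?G)" using FS unfolding HH_def by auto
      show "HH S M (\<Inter>?G) \<subseteq> ?G"
      proof
        fix Q assume Q: "Q \<in> HH S M (\<Inter>?G)"
        have "K \<subseteq> \<Inter>?G" using K ne unfolding HH_def by auto
        hence "Q \<in> F" using Q K unfolding HH_def by auto
        moreover have "Y \<subseteq> \<Inter>?G" by auto
        ultimately show "Q \<in> ?G" using Q unfolding HH_def by auto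
      qed
    qed
    ultimately show ?thesis unfolding spec_closed_def by blast
  qed
  have Pprime: "prime_ideal S M P" unfolding prime_ideal_def
  proof (intro conjI allI impI)
    show "brace_ideal S M P" by fact
    obtain Q where Q: "Q \<in> F" using Fne by auto
    have "P \<subseteq> Q" using Q unfolding P_def by auto
    moreover have "Q \<noteq> carrier S" using Q FS
      unfolding Spec_def prime_ideal_def by auto
    moreover have "Q \<lhd> S" using Q FS
      unfolding Spec_def prime_ideal_def brace_ideal_def by auto
    hence "Q \<subseteq> carrier S" using normal_imp_subgroup subgroup.subset by blast
    ultimately show "P \<noteq> carrier S" by auto
  next
    fix I J assume IJ: "I \<subseteq> carrier S" "J \<subseteq> carrier S" "set_star S M I J \<subseteq> P"
    show "I \<subseteq> P \<or> J \<subseteq> P"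
    proof (rule ccontr)
      assume nIJ: "\<not> (I \<subseteq> P \<or> J \<subseteq> P)"
      have cover: "F = {Q\<in>F. I \<subseteq> Q} \<union> {Q\<in>F. J \<subseteq> Q}"
      proof -
        have "I \<subseteq> Q \<or> J \<subseteq> Q" if "Q \<in> F" for Q
        proof -
          have "set_star S M I J \<subseteq> Q" using IJ(3) that unfolding P_def by auto
          thus ?thesis using that FS IJ unfolding Spec_def prime_ideal_def by blast
        qed
        thus ?thesis by auto
      qed
      have pI: "{Q\<in>F. I \<subseteq> Q} \<subset> F" using nIJ unfolding P_def by auto
      have pJ: "{Q\<in>F. J \<subseteq> Q} \<subset> F" using nIJ unfolding P_def by auto
      have neI: "{Q\<in>F. I \<subseteq> Q} \<noteq> {}" using cover pJ by auto
      have neJ: "{Q\<in>F. J \<subseteq> Q} \<noteq> {}" using cover pI by auto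
      show False using noSplit[of "{Q\<in>F. I \<subseteq> Q}" "{Q\<in>F. J \<subseteq> Q}"]
        closedsub[OF neI] closedsub[OF neJ] pI pJ cover by blast
    qed
  qed
  have "F = HH S M P"
  proof
    show "F \<subseteq> HH S M P" using FS unfolding HH_def P_def by auto
    show "HH S M P \<subseteq> F" using KP K unfolding HH_def by auto
  qed
  thus "\<exists>P\<in>Spec S M. F = HH S M P" using Pprime unfolding Spec_def by blast
qed

end
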